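(* Assume the common support assumption, the overlap assumption and the unconfoundedness assumption. Then for all $x\in\mathcal X$, $\theta(x)=\Gamma(x,p)$, where $p=p_0$ under Design 1 and $p=0$ under Design 2.
   Context: Population variables: $Y^*\in\{0,1\}$ (outcome), $T^*\in\{0,1\}$ (treatment), $X^*$ (covariate vector). Potential outcomes $Y^*(1),Y^*(0)\in\{0,1\}$ satisfy $Y^*=T^*Y^*(1)+(1-T^* )Y^*(0)$. Let $p_0:=\Pr(Y^*=1)$. The observed vector $(Y,T,X)$ arises from Bernoulli sampling: $Y\in\{0,1\}$ is drawn with known probability $h_0:=\Pr(Y=1)\in(0,1)$, and given $Y=y$, $(T,X)$ is drawn from a distribution $\mathcal P_y$. Densities (or mass functions) are denoted by $f$. Design 1 (case-control): for all $t\in\{0,1\}$, $x\in\mathcal X$, $y\in\{0,1\}$, $f_{X|Y}(x\mid y)=f_{X^*|Y^*}(x\mid y)$ and $\Pr(T=t\mid X=x,Y=y)=\Pr(T^*=t\mid X^*=x,Y^*=y)$. Design 2 (case-population): for all $t,x$, $f_{X|Y}(x\mid 0)=f_{X^*}(x)$, $\Pr(T=t\mid X=x,Y=0)=\Pr(T^*=t\mid X^*=x)$, $f_{X|Y}(x\mid 1)=f_{X^*|Y^*}(x\mid 1)$, $\Pr(T=t\mid X=x,Y=1)=\Pr(T^*=t\mid X^*=x,Y^*=1)$. Common support assumption: the support of $X^*$ and that of $X$ given $Y=y$ for $y=0,1$ coincide; call it $\mathcal X$. Let $\Pi(t\mid y,x):=\Pr(T=t\mid Y=y,X=x)$, assumed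 nonzero for all $t,y\in\{0,1\}$. For $p\in[0,1]$, under Design 1, $r(x,p):=\frac{p(1-h_0)\Pr(Y=1\mid X=x)}{p(1-h_0)\Pr(Y=1\mid X=x)+h_0(1-p)\Pr(Y=0\mid X=x)}$, and under Design 2, $r(x,p):=\frac{p(1-h_0)}{h_0}\frac{\Pr(Y=1\mid X=x)}{\Pr(Y=0\mid X=x)}$. Define $\Gamma(x,p):=\frac{\Pi(1\mid 1,x)}{\Pi(0\mid 1,x)}\cdot\frac{\Pi(0\mid 0,x)+r(x,p)\{\Pi(0\mid 1,x)-\Pi(0\mid 0,x)\}}{\Pi(1\mid 0,x)+r(x,p)\{\Pi(1\mid 1,x)-\Pi(1\mid 0,x)\}}$. Causal relative risk: $\theta(x):=\Pr\{Y^*(1)=1\mid X^*=x\}/\Pr\{Y^*(0)=1\mid X^*=x\}$ (denominator assumed positive). Overlap: for all $(t,x)\in\{0,1\}\times\mathcal X$, $0<\Pr\{Y^*(t)=1\mid X^*=x\}<1$ and $0<\Pr(T^*=1\mid X^*=x)<1$. Unconfoundedness: for all $t\in\{0,1\}$, $x\in\mathcal X$, $\Pr\{Y^*(t)=1\mid T^*=1,X^*=x\}=\Pr\{Y^*(t)=1\mid T^*=0,X^*=x\}$. *)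

theory Defs
  imports "HOL-Probability.Probability"
begin

text \<open>Outcomes/treatments in {0,1} are encoded as bool (True = 1).
  Conditionally on X* = x, the triple (Y*(1), Y*(0), T*) has distribution Q x.
  The covariate X* has density fX w.r.t. a base measure M.\<close>

type_synonym pomega = "bool \<times> bool \<times> bool"  \<comment> \<open>(Y*(1), Y*(0), T*)\<close>

definition Ypot :: "bool \<Rightarrow> pomega \<Rightarrow> bool" where
  "Ypot t \<omega> = (if t then fst \<omega> else fst (snd \<omega>))"

definition Tstar :: "pomega \<Rightarrow> bool" where
  "Tstar \<omega> = snd (snd \<omega>)"

definition Ystar :: "pomega \<Rightarrow> bool" where
  "Ystar \<omega> = Ypot (Tstar \<omega>) \<omega>"

definition pr_pot :: "('x \<Rightarrow> pomega pmf) \<Rightarrow> bool \<Rightarrow> 'x \<Rightarrow> real" where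
  "pr_pot Q t x = measure_pmf.prob (Q x) {\<omega>. Ypot t \<omega>}"

definition pr_pot_given_T :: "('x \<Rightarrow> pomega pmf) \<Rightarrow> bool \<Rightarrow> bool \<Rightarrow> 'x \<Rightarrow> real" where
  "pr_pot_given_T Q t s x =
     measure_pmf.prob (Q x) {\<omega>. Ypot t \<omega> \<and> Tstar \<omega> = s} / measure_pmf.prob (Q x) {\<omega>. Tstar \<omega> = s}"

definition pr_T :: "('x \<Rightarrow> pomega pmf) \<Rightarrow> bool \<Rightarrow> 'x \<Rightarrow> real" where
  "pr_T Q t x = measure_pmf.prob (Q x) {\<omega>. Tstar \<omega> = t}"

definition pr_Y :: "('x \<Rightarrow> pomega pmf) \<Rightarrow> bool \<Rightarrow> 'x \<Rightarrow> real" where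
  "pr_Y Q y x = measure_pmf.prob (Q x) {\<omega>. Ystar \<omega> = y}"

definition pr_T_given_Y :: "('x \<Rightarrow> pomega pmf) \<Rightarrow> bool \<Rightarrow> bool \<Rightarrow> 'x \<Rightarrow> real" where
  "pr_T_given_Y Q t y x =
     measure_pmf.prob (Q x) {\<omega>. Tstar \<omega> = t \<and> Ystar \<omega> = y} / pr_Y Q y x"

definition p0 :: "'x measure \<Rightarrow> ('x \<Rightarrow> real) \<Rightarrow> ('x \<Rightarrow> pomega pmf) \<Rightarrow> real" where
  "p0 M fX Q = integral\<^sup>L M (\<lambda>x. fX x * pr_Y Q True x)"

definition f_X_given_Ystar ::
  "'x measure \<Rightarrow> ('x \<Rightarrow> real) \<Rightarrow> ('x \<Rightarrow> pomega pmf) \<Rightarrow> bool \<Rightarrow> 'x \<Rightarrow> real" where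
  "f_X_given_Ystar M fX Q y x =
     fX x * pr_Y Q y x / (if y then p0 M fX Q else 1 - p0 M fX Q)"

definition theta :: "('x \<Rightarrow> pomega pmf) \<Rightarrow> 'x \<Rightarrow> real" where
  "theta Q x = pr_pot Q True x / pr_pot Q False x"

text \<open>Observed (sampled) side: h0 = Pr(Y=1); fXY y = density of X given Y=y (w.r.t. M);
  PiT t y x = Pr(T=t | Y=y, X=x).\<close>

definition pr_Yobs_given_X :: "real \<Rightarrow> (bool \<Rightarrow> 'x \<Rightarrow> real) \<Rightarrow> bool \<Rightarrow> 'x \<Rightarrow> real" where
  "pr_Yobs_given_X h0 fXY y x =
     (if y then h0 * fXY True x else (1 - h0) * fXY False x)
     / (h0 * fXY True x + (1 - h0) * fXY False x)"

datatype design = Design1 | Design2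

definition rfun :: "design \<Rightarrow> real \<Rightarrow> (bool \<Rightarrow> 'x \<Rightarrow> real) \<Rightarrow> 'x \<Rightarrow> real \<Rightarrow> real" where
  "rfun d h0 fXY x p =
     (let a = pr_Yobs_given_X h0 fXY True x; b = pr_Yobs_given_X h0 fXY False x in
      (case d of
         Design1 \<Rightarrow> p * (1 - h0) * a / (p * (1 - h0) * a + h0 * (1 - p) * b)
       | Design2 \<Rightarrow> p * (1 - h0) / h0 * (a / b)))"

definition Gamma :: "design \<Rightarrow> real \<Rightarrow> (bool \<Rightarrow> 'x \<Rightarrow> real) \<Rightarrow> (bool \<Rightarrow> bool \<Rightarrow> 'x \<Rightarrow> real)
                      \<Rightarrow> 'x \<Rightarrow> real \<Rightarrow> real" where
  "Gamma d h0 fXY PiT x p =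
     (let r = rfun d h0 fXY x p in
      PiT True True x / PiT False True x *
      ((PiT False False x + r * (PiT False True x - PiT False False x))
       / (PiT True False x + r * (PiT True True x - PiT True False x))))"

definition design_holds ::
  "design \<Rightarrow> 'x measure \<Rightarrow> ('x \<Rightarrow> real) \<Rightarrow> ('x \<Rightarrow> pomega pmf)
     \<Rightarrow> (bool \<Rightarrow> 'x \<Rightarrow> real) \<Rightarrow> (bool \<Rightarrow> bool \<Rightarrow> 'x \<Rightarrow> real) \<Rightarrow> 'x set \<Rightarrow> bool" where
  "design_holds d M fX Q fXY PiT S =
     (case d of
        Design1 \<Rightarrow> (\<forall>x\<in>S. \<forall>y t.
                      fXY y x = f_X_given_Ystar M fX Q y x \<and> PiT t y x = pr_T_given_Y Q t y x)
      | Design2 \<Rightarrow> (\<forall>x\<in>S. \<forall>t.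
                      fXY False x = fX x \<and> PiT t False x = pr_T Q t x \<and>
                      fXY True x = f_X_given_Ystar M fX Q True x \<and> PiT t True x = pr_T_given_Y Q t True x))"

end

theory Submission
  imports Defs
begin

lemma prob_eq: "measure_pmf.prob P A = (\<Sum>a\<in>UNIV. \<Sum>b\<in>UNIV. \<Sum>c\<in>UNIV. if (a,b,c)\<in>A then pmf P (a,b,c) else 0)"
  for P :: "pomega pmf"
proof -
  have "measure_pmf.prob P A = (\<Sum>w\<in>A. pmf P w)"
    by (rule measure_measure_pmf_finite) simp
  also have "\<dots> = (\<Sum>w\<in>UNIV. if w \<in> A then pmf P w else 0)"
    by (simp add: sum.If_cases)
  also have "\<dots> = (\<Sum>a\<in>UNIV. \<Sum>b\<in>UNIV. \<Sum>c\<in>UNIV. if (a,b,c)\<in>A then pmf P (a,b,c) else 0)"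
    by (simp add: UNIV_Times_UNIV[symmetric] sum.cartesian_product del: UNIV_Times_UNIV)
  finally show ?thesis .
qed

lemma tot: "(\<Sum>a\<in>UNIV. \<Sum>b\<in>UNIV. \<Sum>c\<in>UNIV. pmf P (a,b,c)) = 1" for P :: "pomega pmf"
  using prob_eq[of P UNIV] by simp

lemma key:
  fixes P :: "pomega pmf"
  defines "q \<equiv> \<lambda>a b c. pmf P (a,b,c)"
  shows
   "measure_pmf.prob P {\<omega>. Ypot True \<omega>} = q True True True + q True False True + q True True False + q True False False"
   "measure_pmf.prob P {\<omega>. Ypot False \<omega>} = q True True False + q False True False + q True True True + q False True True"
   "measure_pmf.prob P {\<omega>. Ypot True \<omega> \<and> Tstar \<omega> = True} = q True True True + q True False True"
   "measure_pmf.prob P {\<omega>. Ypot True \<omega> \<and> Tstar \<omega> = False} = q True True False + q True False False"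
   "measure_pmf.prob P {\<omega>. Ypot False \<omega> \<and> Tstar \<omega> = True} = q True True True + q False True True"
   "measure_pmf.prob P {\<omega>. Ypot False \<omega> \<and> Tstar \<omega> = False} = q True True False + q False True False"
   "measure_pmf.prob P {\<omega>. Tstar \<omega> = True} = q True True True + q True False True + q False True True + q False False True"
   "measure_pmf.prob P {\<omega>. Tstar \<omega> = False} = q True True False + q True False False + q False True False + q False False False"
   "measure_pmf.prob P {\<omega>. Ystar \<omega> = True} = q True True True + q True False True + q True True False + q False True False"
   "measure_pmf.prob P {\<omega>. Ystar \<omega> = False} = q False True True + q False False True + q True False False + q False False False"
   "measure_pmf.prob P {\<omega>. Tstar \<omega> = True \<and> Ystar \<omega> = True} = q True True True + q True False True"
   "measure_pmf.prob P {\<omega>. Tstar \<omega> = False \<and> Ystar \<omega> = True} = q True True False + q False True False"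
   "measure_pmf.prob P {\<omega>. Tstar \<omega> = True \<and> Ystar \<omega> = False} = q False True True + q False False True"
   "measure_pmf.prob P {\<omega>. Tstar \<omega> = False \<and> Ystar \<omega> = False} = q True False False + q False False False"
   "q True True True + q True False True + q True True False + q True False False + q False True True + q False False True + q False True False + q False False False = 1"
  using tot[of P] by (simp_all add: q_def prob_eq UNIV_bool Ystar_def Ypot_def Tstar_def algebra_simps)

lemma h1: "(s::real) > 0 \<Longrightarrow> (u * (a/s))/(u * (a/s)+v * (b/s)) = u * a/(u * a+v * b)"
proof -
  assume s: "s > 0"
  have "u * (a/s) = (u * a)/s" "v * (b/s) = (v * b)/s" by simp_all
  then have "(u * (a/s))/(u * (a/s)+v * (b/s)) = ((u * a)/s)/((u * a)/s+(v * b)/s)" by simp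
  also have "(u * a)/s+(v * b)/s = (u * a+v * b)/s" by (simp add: add_divide_distrib)
  finally show ?thesis using s by simp
qed
lemma h2: "(K::real) \<noteq> 0 \<Longrightarrow> (K*a)/(K*a+K*b) = a/(a+b)"
  by (metis distrib_left mult_divide_mult_cancel_left)
lemma h3: "(y1::real) > 0 \<Longrightarrow> y0 > 0 \<Longrightarrow> y1 + y0 = 1 \<Longrightarrow> h/y0 + y1*(c/y1 - h/y0) = c + h"
proof -
  assume a: "y1 > 0" "y0 > 0" "y1 + y0 = 1"
  have e: "y1*(c/y1 - h/y0) = c - y1*(h/y0)" using a(1) by (simp add: right_diff_distrib)
  have "h/y0 + y1*(c/y1 - h/y0) = c + (1 - y1) * (h/y0)" unfolding e left_diff_distrib by simp
  also have "1 - y1 = y0" using a(3) by simp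
  also have "c + y0 * (h/y0) = c + h" using a(2) by simp
  finally show ?thesis .
qed
lemma h4: "(y::real) > 0 \<Longrightarrow> a / y / (c / y) = a / c"
  by simp

theorem theorem1:
  fixes d :: design
    and M :: "'x measure" and fX :: "'x \<Rightarrow> real" and Q :: "'x \<Rightarrow> pomega pmf"
    and h0 :: real and fXY :: "bool \<Rightarrow> 'x \<Rightarrow> real" and PiT :: "bool \<Rightarrow> bool \<Rightarrow> 'x \<Rightarrow> real"
    and S :: "'x set"
  assumes fX_density: "\<forall>x. fX x \<ge> 0" "integrable M fX" "integral\<^sup>L M fX = 1"
    and Q_meas: "\<forall>A. (\<lambda>x. measure_pmf.prob (Q x) A) \<in> borel_measurable M"
    and h0: "0 < h0" "h0 < 1"
    and fXY_density: "\<forall>y x. fXY y x \<ge> 0" "\<forall>y. integrable M (fXY y)" "\<forall>y. integral\<^sup>L M (fXY y) = 1"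
    and Pi_cond: "\<forall>x\<in>S. \<forall>t y. PiT t y x > 0" "\<forall>x\<in>S. \<forall>y. PiT True y x + PiT False y x = 1"
    and common_support: "S = {x. fX x > 0}" "\<forall>y. {x. fXY y x > 0} = S"
    and design: "design_holds d M fX Q fXY PiT S"
    and overlap: "\<forall>x\<in>S. \<forall>t. 0 < pr_pot Q t x \<and> pr_pot Q t x < 1"
                 "\<forall>x\<in>S. 0 < pr_T Q True x \<and> pr_T Q True x < 1"
    and unconfounded: "\<forall>x\<in>S. \<forall>t. pr_pot_given_T Q t True x = pr_pot_given_T Q t False x"
  shows "\<forall>x\<in>S. theta Q x =
           Gamma d h0 fXY PiT x (case d of Design1 \<Rightarrow> p0 M fX Q | Design2 \<Rightarrow> 0)"
proof
  fix x assume xS: "x \<in> S"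
  define q where "q \<equiv> \<lambda>a b c. pmf (Q x) (a,b,c)"
  define A where "A = q True True True + q True False True"
  define E where "E = q True True False + q True False False"
  define C where "C = q True True False + q False True False"
  define Fv where "Fv = q True True True + q False True True"
  define G where "G = q False True True + q False False True"
  define H where "H = q True False False + q False False False"
  note k = key[of "Q x"]
  have nn: "q a b c \<ge> 0" for a b c by (simp add: q_def)
  have tot1: "A + G + C + H = 1" using k(15) unfolding A_def G_def C_def H_def q_def by linarith
  have pT1: "pr_T Q True x = A + G" unfolding pr_T_def k q_def A_def G_def by simp
  have pT0: "pr_T Q False x = C + H" unfolding pr_T_def k q_def C_def H_def by simp
  have pY1: "pr_Y Q True x = A + C" unfolding pr_Y_def k q_def A_def C_def by simp
  have pY0: "pr_Y Q False x = G + H" unfolding pr_Y_def k q_def G_def H_def by simp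
  have pp1: "pr_pot Q True x = A + E" unfolding pr_pot_def k q_def A_def E_def by simp
  have pp0: "pr_pot Q False x = C + Fv" unfolding pr_pot_def k q_def C_def Fv_def by simp
  have u1: "A / (A + G) = E / (C + H)"
    using bspec[OF unconfounded xS, THEN spec[of _ True]]
    unfolding pr_pot_given_T_def k q_def A_def E_def C_def H_def G_def by (simp add: ac_simps)
  have u0: "Fv / (A + G) = C / (C + H)"
    using bspec[OF unconfounded xS, THEN spec[of _ False]]
    unfolding pr_pot_given_T_def k q_def Fv_def C_def H_def G_def A_def by (simp add: ac_simps)
  have Bpos: "A + G > 0" using overlap(2) xS pT1 by auto
  have Dpos: "C + H > 0" using overlap(2) xS pT1 pT0 tot1 by auto
  have p0pos: "C + Fv > 0" using overlap(1) xS pp0 by (metis (full_types))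
  have u1': "A * (C + H) = E * (A + G)" using u1 Bpos Dpos by (simp add: field_simps)
  have u0': "Fv * (C + H) = C * (A + G)" using u0 Bpos Dpos by (simp add: field_simps)
  have Cpos: "C > 0"
  proof (rule ccontr)
    assume "\<not> C > 0"
    moreover have "C \<ge> 0" unfolding C_def using nn by (simp add: add_nonneg_nonneg)
    ultimately have "C = 0" by simp
    then have "Fv = 0" using u0' Dpos by simp
    then show False using p0pos \<open>C = 0\<close> by simp
  qed
  have th: "theta Q x = A * (C + H) / (C * (A + G))"
  proof -
    have "(A + E) * (C * (A + G)) = A * (C + H) * (C + Fv)"
    proof -
      have "(A + E) * (C * (A + G)) = A * C * (A + G) + (E * (A + G)) * C" by (simp add: algebra_simps)
      also have "\<dots> = A * C * (A + G) + A * (C + H) * C" using u1' by simp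
      also have "\<dots> = A * (C * (A + G)) + A * (C + H) * C" by (simp add: algebra_simps)
      also have "\<dots> = A * (Fv * (C + H)) + A * (C + H) * C" using u0' by simp
      also have "\<dots> = A * (C + H) * (C + Fv)" by (simp add: algebra_simps)
      finally show ?thesis .
    qed
    moreover have "C + Fv \<noteq> 0" "C * (A + G) \<noteq> 0" using p0pos Cpos Bpos by auto
    ultimately show ?thesis unfolding theta_def pp1 pp0
      by (simp add: frac_eq_eq)
  qed
  have fXpos: "fX x > 0" using common_support xS by auto
  have f1pos: "fXY True x > 0" using common_support(2) xS by blast
  have f0pos: "fXY False x > 0" using common_support(2) xS by blast
  show "theta Q x = Gamma d h0 fXY PiT x (case d of Design1 \<Rightarrow> p0 M fX Q | Design2 \<Rightarrow> 0)"
  proof (cases d)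
    case Design2
    have D: "fXY True x = f_X_given_Ystar M fX Q True x" "PiT t True x = pr_T_given_Y Q t True x"
      "PiT t False x = pr_T Q t x" for t
      using design xS unfolding Design2 design_holds_def by auto
    have Y1pos: "A + C > 0"
    proof -
      have "A + C \<ge> 0" unfolding A_def C_def using nn by (simp add: add_nonneg_nonneg)
      moreover have "A + C \<noteq> 0" using f1pos D(1) unfolding f_X_given_Ystar_def pY1 by auto
      ultimately show ?thesis by simp
    qed
    have PT: "PiT True True x = A / (A + C)" "PiT False True x = C / (A + C)"
      "PiT True False x = A + G" "PiT False False x = C + H"
      using D(2)[of True] D(2)[of False] D(3)[of True] D(3)[of False]
      unfolding pr_T_given_Y_def pY1 pT1 pT0 k by (simp_all add: q_def A_def C_def)
    have "A / (A + C) / (C / (A + C)) = A / C"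
    proof -
      have "A / (A + C) / (C / (A + C)) = (A / (A + C)) * ((A + C) / C)" by (simp only: divide_divide_eq_right times_divide_eq_right)
      also have "\<dots> = A / C" using Y1pos by simp
      finally show ?thesis .
    qed
    have r0: "rfun Design2 h0 fXY x 0 = 0" by (simp add: rfun_def)
    have "Gamma d h0 fXY PiT x 0 = PiT True True x / PiT False True x * (PiT False False x / PiT True False x)"
      unfolding Design2 Gamma_def Let_def r0 by simp
    also have "\<dots> = A / (A + C) / (C / (A + C)) * ((C + H) / (A + G))" unfolding PT by (rule refl)
    also have "\<dots> = A / C * ((C + H) / (A + G))" unfolding \<open>A / (A + C) / (C / (A + C)) = A / C\<close> by (rule refl)
    also have "\<dots> = A * (C + H) / (C * (A + G))" by simp
    finally show ?thesis unfolding th using Design2 by simp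
  next
    case Design1
    have D: "fXY y x = f_X_given_Ystar M fX Q y x" "PiT t y x = pr_T_given_Y Q t y x" for t y
      using design xS unfolding Design1 design_holds_def by auto
    let ?p = "p0 M fX Q"
    have Y1nn: "A + C \<ge> 0" unfolding A_def C_def using nn by (simp add: add_nonneg_nonneg)
    have Y0nn: "G + H \<ge> 0" unfolding G_def H_def using nn by (simp add: add_nonneg_nonneg)
    have f1: "fXY True x = fX x * (A + C) / ?p" using D(1)[of True] unfolding f_X_given_Ystar_def pY1 by simp
    have f0: "fXY False x = fX x * (G + H) / (1 - ?p)" using D(1)[of False] unfolding f_X_given_Ystar_def pY0 by simp
    have ppos: "?p > 0"
    proof (rule ccontr)
      assume "\<not> ?p > 0"
      then have "?p \<le> 0" by linarith
      have "fX x * (A + C) / ?p \<le> 0"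
        by (rule divide_nonneg_nonpos[OF mult_nonneg_nonneg[OF less_imp_le[OF fXpos] Y1nn] \<open>?p \<le> 0\<close>])
      then show False using f1pos f1 by linarith
    qed
    have plt: "1 - ?p > 0"
    proof (rule ccontr)
      assume "\<not> 1 - ?p > 0"
      then have "1 - ?p \<le> 0" by linarith
      have "fX x * (G + H) / (1 - ?p) \<le> 0"
        by (rule divide_nonneg_nonpos[OF mult_nonneg_nonneg[OF less_imp_le[OF fXpos] Y0nn] \<open>1 - ?p \<le> 0\<close>])
      then show False using f0pos f0 by linarith
    qed
    have Y1pos: "A + C > 0"
    proof (rule ccontr)
      assume "\<not> A + C > 0"
      then have "A + C = 0" using Y1nn by linarith
      then have "fXY True x = 0" unfolding f1 by simp
      then show False using f1pos by linarith
    qed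
    have Y0pos: "G + H > 0"
    proof (rule ccontr)
      assume "\<not> G + H > 0"
      then have "G + H = 0" using Y0nn by linarith
      then have "fXY False x = 0" unfolding f0 by simp
      then show False using f0pos by linarith
    qed
    have r: "rfun Design1 h0 fXY x ?p = A + C"
    proof -
      define a1 where "a1 = h0 * fXY True x"
      define b1 where "b1 = (1 - h0) * fXY False x"
      have a1p: "a1 > 0" unfolding a1_def using h0 f1pos by simp
      have b1p: "b1 > 0" unfolding b1_def using h0 f0pos by simp
      have sp: "a1 + b1 > 0" using a1p b1p by simp
      have "rfun Design1 h0 fXY x ?p = ?p * (1 - h0) * (a1 / (a1 + b1)) /
              (?p * (1 - h0) * (a1 / (a1 + b1)) + h0 * (1 - ?p) * (b1 / (a1 + b1)))"
        unfolding rfun_def pr_Yobs_given_X_def a1_def[symmetric] b1_def[symmetric] Let_def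
        by simp
      also have "\<dots> = ?p * (1 - h0) * a1 / (?p * (1 - h0) * a1 + h0 * (1 - ?p) * b1)"
        by (rule h1[OF sp])
      also have "?p * (1 - h0) * a1 = (h0 * (1 - h0) * fX x) * (A + C)"
        unfolding a1_def f1 using ppos by simp
      also have "h0 * (1 - ?p) * b1 = (h0 * (1 - h0) * fX x) * (G + H)"
        unfolding b1_def f0 using plt by simp
      also have "(h0 * (1 - h0) * fX x) * (A + C) / ((h0 * (1 - h0) * fX x) * (A + C) + (h0 * (1 - h0) * fX x) * (G + H))
          = (A + C) / ((A + C) + (G + H))"
        by (rule h2) (use h0 fXpos in simp)
      also have "(A + C) + (G + H) = 1" using tot1 by simp
      finally show ?thesis by simp
    qed
    have PT: "PiT True True x = A / (A + C)" "PiT False True x = C / (A + C)"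
      "PiT True False x = G / (G + H)" "PiT False False x = H / (G + H)"
      using D(2)[of True True] D(2)[of False True] D(2)[of True False] D(2)[of False False]
      unfolding pr_T_given_Y_def pY1 pY0 k by (simp_all add: q_def A_def C_def G_def H_def)
    have sum1: "A + C + (G + H) = 1" using tot1 by simp
    have num: "H / (G + H) + (A + C) * (C / (A + C) - H / (G + H)) = C + H"
      by (rule h3[OF Y1pos Y0pos sum1])
    have den: "G / (G + H) + (A + C) * (A / (A + C) - G / (G + H)) = A + G"
      by (rule h3[OF Y1pos Y0pos sum1])
    have "Gamma d h0 fXY PiT x ?p = A / (A + C) / (C / (A + C)) * ((C + H) / (A + G))"
      unfolding Design1 Gamma_def Let_def r PT num den by simp
    also have "\<dots> = A / C * ((C + H) / (A + G))" using h4[OF Y1pos] by simp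
    also have "\<dots> = A * (C + H) / (C * (A + G))" by simp
    finally show ?thesis unfolding th using Design1 by simp
  qed
qed

end
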